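(* Let $d$ be prime, $n\ge 1$, $G$ invertible over $\mathbb Z_d$ with $N=(\det G)^{-1}$, and let $\rho,\sigma$ be $n$-qudit states. Then for all $\vec p,\vec q\in\mathbb Z_d^n$, $$\Xi_{\rho\boxtimes\sigma}(\vec p,\vec q)=\Xi_\rho(Ng_{11}\vec p,\ g_{00}\vec q)\;\Xi_\sigma(-Ng_{10}\vec p,\ g_{01}\vec q).$$
   Context: Fix a prime $d$; on $\mathcal H=\mathbb C^d$, $\chi(k)=e^{2\pi ik/d}$, $X|k\rangle=|k+1\rangle$, $Z|k\rangle=\chi(k)|k\rangle$. Weyl operators: $w(p,q)=\chi(-2^{-1}pq)Z^pX^q$ for odd $d$, $w(p,q)=i^{-pq}Z^pX^q$ for $d=2$, $w(\vec p,\vec q)=\bigotimes_k w(p_k,q_k)$. Characteristic function $\Xi_\rho(\vec p,\vec q)=\mathrm{Tr}[\rho\,w(-\vec p,-\vec q)]$. Let $G=\begin{pmatrix}g_{00}&g_{01}\\ g_{10}&g_{11}\end{pmatrix}$ over $\mathbb Z_d$ with $\det G\not\equiv0$, $N=(\det G)^{-1}$. Key unitary $U$ on $\mathcal H_A\otimes\mathcal H_B$ ($\mathcal H_A=\mathcal H_B=\mathcal H^{\otimes n}$): $U|\vec i\rangle|\vec j\rangle=|Ng_{11}\vec i-Ng_{10}\vec j\rangle|-Ng_{01}\vec i+Ng_{00}\vec j\rangle$. Convolution: $\rho\boxtimes\sigma=\mathrm{Tr}_B[U(\rho\otimes\sigma)U^\dagger]$. *)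

theory Defs
  imports Complex_Main "HOL-Computational_Algebra.Primes" "HOL-Library.FuncSet"
begin

text \<open>Computational basis of (C^d)^{\<otimes>n}: vectors in Z_d^n, represented by
  their representatives in {0..d-1}, as functions nat => int that vanish from n on.\<close>
definition idx :: "nat \<Rightarrow> nat \<Rightarrow> (nat \<Rightarrow> int) set" where
  "idx d n = {i. (\<forall>k<n. 0 \<le> i k \<and> i k < int d) \<and> (\<forall>k\<ge>n. i k = 0)}"

text \<open>Operators on (C^d)^{\<otimes>n} as matrices indexed by basis vectors: A a b = <a|A|b>.\<close>
type_synonym op = "(nat \<Rightarrow> int) \<Rightarrow> (nat \<Rightarrow> int) \<Rightarrow> complex"
type_synonym op2 = "((nat \<Rightarrow> int) \<times> (nat \<Rightarrow> int)) \<Rightarrow> ((nat \<Rightarrow> int) \<times> (nat \<Rightarrow> int)) \<Rightarrow> complex"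

definition inv_mod :: "nat \<Rightarrow> int \<Rightarrow> int" where
  "inv_mod d a = (SOME b. 0 \<le> b \<and> b < int d \<and> (a * b) mod int d = 1 mod int d)"

definition chi :: "nat \<Rightarrow> int \<Rightarrow> complex" where
  "chi d k = exp (2 * pi * \<i> * of_int k / of_nat d)"

text \<open>Matrix entries of Z^p X^q: Z^p X^q |b> = chi(p(b+q)) |b+q>.\<close>
definition ZX :: "nat \<Rightarrow> int \<Rightarrow> int \<Rightarrow> int \<Rightarrow> int \<Rightarrow> complex" where
  "ZX d p q a b = (if a mod int d = (b + q) mod int d then chi d (p * a) else 0)"

definition weyl1 :: "nat \<Rightarrow> int \<Rightarrow> int \<Rightarrow> int \<Rightarrow> int \<Rightarrow> complex" where
  "weyl1 d p q a b =
     (let p' = p mod int d; q' = q mod int d in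
      (if d = 2 then \<i> powi (- (p' * q')) else chi d (- (inv_mod d 2 * p' * q')))
      * ZX d p' q' a b)"

definition weyl :: "nat \<Rightarrow> nat \<Rightarrow> (nat \<Rightarrow> int) \<Rightarrow> (nat \<Rightarrow> int) \<Rightarrow> op" where
  "weyl d n p q a b = (\<Prod>k<n. weyl1 d (p k) (q k) (a k) (b k))"

definition tr :: "nat \<Rightarrow> nat \<Rightarrow> op \<Rightarrow> complex" where
  "tr d n A = (\<Sum>a\<in>idx d n. A a a)"

definition mmul :: "nat \<Rightarrow> nat \<Rightarrow> op \<Rightarrow> op \<Rightarrow> op" where
  "mmul d n A B a b = (\<Sum>c\<in>idx d n. A a c * B c b)"

definition charfun :: "nat \<Rightarrow> nat \<Rightarrow> op \<Rightarrow> (nat \<Rightarrow> int) \<Rightarrow> (nat \<Rightarrow> int) \<Rightarrow> complex" where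
  "charfun d n \<rho> p q = tr d n (mmul d n \<rho> (weyl d n (\<lambda>k. - p k) (\<lambda>k. - q k)))"

definition is_state :: "nat \<Rightarrow> nat \<Rightarrow> op \<Rightarrow> bool" where
  "is_state d n \<rho> \<longleftrightarrow>
     (\<forall>a\<in>idx d n. \<forall>b\<in>idx d n. \<rho> a b = cnj (\<rho> b a)) \<and>
     (\<forall>v :: (nat \<Rightarrow> int) \<Rightarrow> complex.
        let s = (\<Sum>a\<in>idx d n. \<Sum>b\<in>idx d n. cnj (v a) * \<rho> a b * v b) in Im s = 0 \<and> Re s \<ge> 0) \<and>
     tr d n \<rho> = 1"

definition vmod :: "nat \<Rightarrow> (nat \<Rightarrow> int) \<Rightarrow> (nat \<Rightarrow> int)" where
  "vmod d v = (\<lambda>k. v k mod int d)"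

definition keyU :: "nat \<Rightarrow> int \<Rightarrow> int \<Rightarrow> int \<Rightarrow> int \<Rightarrow> op2" where
  "keyU d g00 g01 g10 g11 ab ij =
     (let N = inv_mod d (g00 * g11 - g01 * g10); i = fst ij; j = snd ij in
      if fst ab = vmod d (\<lambda>k. N * g11 * i k - N * g10 * j k)
       \<and> snd ab = vmod d (\<lambda>k. - N * g01 * i k + N * g00 * j k) then 1 else 0)"

definition mmul2 :: "nat \<Rightarrow> nat \<Rightarrow> op2 \<Rightarrow> op2 \<Rightarrow> op2" where
  "mmul2 d n A B x y = (\<Sum>z\<in>idx d n \<times> idx d n. A x z * B z y)"

definition adj2 :: "op2 \<Rightarrow> op2" where
  "adj2 A x y = cnj (A y x)"

definition tensor :: "op \<Rightarrow> op \<Rightarrow> op2" where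
  "tensor \<rho> \<sigma> x y = \<rho> (fst x) (fst y) * \<sigma> (snd x) (snd y)"

definition ptraceB :: "nat \<Rightarrow> nat \<Rightarrow> op2 \<Rightarrow> op" where
  "ptraceB d n M a b = (\<Sum>j\<in>idx d n. M (a, j) (b, j))"

definition conv :: "nat \<Rightarrow> nat \<Rightarrow> int \<Rightarrow> int \<Rightarrow> int \<Rightarrow> int \<Rightarrow> op \<Rightarrow> op \<Rightarrow> op" where
  "conv d n g00 g01 g10 g11 \<rho> \<sigma> =
     ptraceB d n (mmul2 d n (mmul2 d n (keyU d g00 g01 g10 g11) (tensor \<rho> \<sigma>))
                            (adj2 (keyU d g00 g01 g10 g11)))"

end

theory Submission
  imports Defs "HOL-Analysis.Analysis"
begin


lemma inv_mod_prop:
  assumes "prime d" "a mod int d \<noteq> 0"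
  shows "0 \<le> inv_mod d a \<and> inv_mod d a < int d \<and> (a * inv_mod d a) mod int d = 1 mod int d"
proof -
  have pd: "prime (int d)" using assms(1) by simp
  have "\<not> int d dvd a" using assms(2) by (simp add: dvd_eq_mod_eq_0)
  then have "coprime a (int d)" using pd prime_imp_coprime[of "int d" a] coprime_commute by blast
  then have g: "gcd a (int d) = 1" by simp
  obtain u v where uv: "u * a + v * int d = gcd a (int d)" using bezout_int by blast
  have x: "(a * u) mod int d = 1 mod int d" using uv g
    by (metis mod_mult_self2 mult.commute)
  have dp: "int d > 0" using assms(1) prime_gt_0_nat by auto
  have "0 \<le> u mod int d \<and> u mod int d < int d \<and> (a * (u mod int d)) mod int d = 1 mod int d"
    using x dp by (simp add: mod_mult_right_eq)
  then show ?thesis unfolding inv_mod_def by (rule someI)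
qed

lemma chi_add: "chi d (x + y) = chi d x * chi d y"
  unfolding chi_def by (simp add: distrib_left add_divide_distrib exp_add)

lemma chi_cong:
  assumes "d > 0" "x mod int d = y mod int d"
  shows "chi d x = chi d y"
proof -
  obtain k where k: "x = y + int d * k"
    using assms(2) by (metis mod_eq_dvd_iff dvdE diff_eq_eq add.commute)
  have "chi d x = chi d y * chi d (int d * k)" using k chi_add by simp
  moreover have "chi d (int d * k) = 1"
    unfolding chi_def using assms(1)
    by (simp add: mult.commute mult.left_commute)
  ultimately show ?thesis by simp
qed



lemma ZX_cond:
  fixes d :: nat and N g00 g01 g10 g11 i j i' j' q :: int
  assumes ND: "int d dvd (N*(g00*g11 - g01*g10) - 1)"
  shows "(int d dvd ((- N*g01*i + N*g00*j) - (- N*g01*i' + N*g00*j'))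
          \<and> int d dvd ((N*g11*i' - N*g10*j') - ((N*g11*i - N*g10*j) - q)))
     \<longleftrightarrow> (int d dvd (i' - (i - g00*q)) \<and> int d dvd (j' - (j - g01*q)))"
proof
  let ?E = "N*(g00*g11 - g01*g10) - 1"
  assume h: "int d dvd ((- N*g01*i + N*g00*j) - (- N*g01*i' + N*g00*j'))
          \<and> int d dvd ((N*g11*i' - N*g10*j') - ((N*g11*i - N*g10*j) - q))"
  have e1: "i' - (i - g00*q) = g00 * ((N*g11*i' - N*g10*j') - ((N*g11*i - N*g10*j) - q))
      - g10 * ((- N*g01*i + N*g00*j) - (- N*g01*i' + N*g00*j')) - ?E * (i' - i)"
    by (simp add: algebra_simps)
  have e2: "j' - (j - g01*q) = g01 * ((N*g11*i' - N*g10*j') - ((N*g11*i - N*g10*j) - q))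
      - g11 * ((- N*g01*i + N*g00*j) - (- N*g01*i' + N*g00*j')) - ?E * (j' - j)"
    by (simp add: algebra_simps)
  show "int d dvd (i' - (i - g00*q)) \<and> int d dvd (j' - (j - g01*q))"
    unfolding e1 e2 using h ND by (meson dvd_diff dvd_mult dvd_mult2)
next
  let ?E = "N*(g00*g11 - g01*g10) - 1"
  assume h: "int d dvd (i' - (i - g00*q)) \<and> int d dvd (j' - (j - g01*q))"
  have e1: "(- N*g01*i + N*g00*j) - (- N*g01*i' + N*g00*j') =
     N*g01*(i' - (i - g00*q)) - N*g00*(j' - (j - g01*q))"
    by (simp add: algebra_simps)
  have e2: "(N*g11*i' - N*g10*j') - ((N*g11*i - N*g10*j) - q) =
     N*g11*(i' - (i - g00*q)) - N*g10*(j' - (j - g01*q)) - ?E * q"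
    by (simp add: algebra_simps)
  show "int d dvd ((- N*g01*i + N*g00*j) - (- N*g01*i' + N*g00*j'))
          \<and> int d dvd ((N*g11*i' - N*g10*j') - ((N*g11*i - N*g10*j) - q))"
    unfolding e1 e2 using h ND by (meson dvd_diff dvd_mult dvd_mult2)
qed



lemma ZX_part:
  fixes d :: nat and N g00 g01 g10 g11 i j i' j' p q :: int
  assumes d0: "d > 0" and ND: "int d dvd (N*(g00*g11 - g01*g10) - 1)"
  shows "(if (- N*g01*i + N*g00*j) mod int d = (- N*g01*i' + N*g00*j') mod int d then 1 else 0)
     * ZX d ((- p) mod int d) ((- q) mod int d) ((N*g11*i' - N*g10*j') mod int d) ((N*g11*i - N*g10*j) mod int d)
   = ZX d ((- (N*g11*p)) mod int d) ((- (g00*q)) mod int d) i' i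
     * ZX d ((- (- N*g10*p)) mod int d) ((- (g01*q)) mod int d) j' j"
proof -
  have c1: "((- N*g01*i + N*g00*j) mod int d = (- N*g01*i' + N*g00*j') mod int d) \<longleftrightarrow>
     int d dvd ((- N*g01*i + N*g00*j) - (- N*g01*i' + N*g00*j'))"
    by (rule mod_eq_dvd_iff)
  have c2: "((N*g11*i' - N*g10*j') mod int d) mod int d = ((N*g11*i - N*g10*j) mod int d + (- q) mod int d) mod int d
     \<longleftrightarrow> int d dvd ((N*g11*i' - N*g10*j') - ((N*g11*i - N*g10*j) - q))"
  proof -
    have "((N*g11*i - N*g10*j) mod int d + (- q) mod int d) mod int d = ((N*g11*i - N*g10*j) - q) mod int d"
      by (simp add: mod_simps)
    note e = this
    show ?thesis unfolding mod_mod_trivial e by (rule mod_eq_dvd_iff)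
  qed
  have c3: "i' mod int d = (i + (- (g00*q)) mod int d) mod int d \<longleftrightarrow> int d dvd (i' - (i - g00*q))"
  proof -
    have "(i + (- (g00*q)) mod int d) mod int d = (i - g00*q) mod int d" by (simp add: mod_simps)
    note e = this
    show ?thesis unfolding e by (rule mod_eq_dvd_iff)
  qed
  have c4: "j' mod int d = (j + (- (g01*q)) mod int d) mod int d \<longleftrightarrow> int d dvd (j' - (j - g01*q))"
  proof -
    have "(j + (- (g01*q)) mod int d) mod int d = (j - g01*q) mod int d" by (simp add: mod_simps)
    note e = this
    show ?thesis unfolding e by (rule mod_eq_dvd_iff)
  qed
  have ch: "chi d ((- p) mod int d * ((N*g11*i' - N*g10*j') mod int d))
     = chi d ((- (N*g11*p)) mod int d * i') * chi d ((- (- N*g10*p)) mod int d * j')"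
  proof -
    have "((- p) mod int d * ((N*g11*i' - N*g10*j') mod int d)) mod int d
        = ((- p) * (N*g11*i' - N*g10*j')) mod int d" by (simp add: mod_simps)
    also have "(- p) * (N*g11*i' - N*g10*j') = (- (N*g11*p)) * i' + (- (- N*g10*p)) * j'"
      by (simp add: algebra_simps)
    also have "((- (N*g11*p)) * i' + (- (- N*g10*p)) * j') mod int d
       = ((- (N*g11*p)) mod int d * i' + (- (- N*g10*p)) mod int d * j') mod int d"
      by (simp only: mod_add_eq[symmetric, of "_ mod int d * _"] mod_mult_left_eq) (rule mod_add_eq[symmetric])
    finally show ?thesis using chi_cong[OF d0] chi_add by metis
  qed
  show ?thesis
    unfolding ZX_def using ZX_cond[OF ND, of i j i' j' q] c1 c2 c3 c4 ch
    by auto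
qed



definition ph :: "nat \<Rightarrow> int \<Rightarrow> int \<Rightarrow> complex" where
  "ph d p q = (let p' = p mod int d; q' = q mod int d in
      (if d = 2 then \<i> powi (- (p' * q')) else chi d (- (inv_mod d 2 * p' * q'))))"

lemma weyl1_split: "weyl1 d p q a b = ph d p q * ZX d (p mod int d) (q mod int d) a b"
  unfolding weyl1_def ph_def Let_def by simp

lemma mod_prod_dvd:
  fixes a b z m :: int
  assumes "a * b = z"
  shows "m dvd (a mod m * (b mod m) - z)"
  using assms by (metis mod_eq_dvd_iff mod_mod_trivial mod_mult_eq)

lemma ph_part:
  fixes d :: nat and N g00 g01 g10 g11 p q :: int
  assumes d0: "d > 0" and ND: "int d dvd (N*(g00*g11 - g01*g10) - 1)"
  shows "ph d (- p) (- q) = ph d (- (N*g11*p)) (- (g00*q)) * ph d (- (- N*g10*p)) (- (g01*q))"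
proof (cases "d = 2")
  case True
  have m: "\<And>x::int. x mod 2 = (if even x then 0 else 1)"
    by (auto simp: even_iff_mod_2_eq_zero odd_iff_mod_2_eq_one)
  have e2: "even (N*(g00*g11 - g01*g10) - 1)" using ND True by simp
  then have "odd ((N*(g00*g11 - g01*g10) - 1) + 1)" by simp
  then have odd: "odd (N*(g00*g11 - g01*g10))" by simp
  have key: "(- p) mod 2 * ((- q) mod 2) = (- (N*g11*p)) mod 2 * ((- (g00*q)) mod 2)
       + (- (- N*g10*p)) mod 2 * ((- (g01*q)) mod 2)"
    using odd by (auto simp add: m)
  have pw: "\<i> powi (- ((- p) mod 2 * ((- q) mod 2))) = \<i> powi (- ((- (N*g11*p)) mod 2 * ((- (g00*q)) mod 2)))
       * \<i> powi (- ((- (- N*g10*p)) mod 2 * ((- (g01*q)) mod 2)))"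
    unfolding key minus_add_distrib by (rule power_int_add) simp
  show ?thesis unfolding ph_def Let_def using True pw
    by simp
next
  case False
  let ?c = "inv_mod d 2"
  let ?X0 = "(- p) mod int d * ((- q) mod int d)"
  let ?X1 = "(- (N*g11*p)) mod int d * ((- (g00*q)) mod int d)"
  let ?X2 = "(- (- N*g10*p)) mod int d * ((- (g01*q)) mod int d)"
  have h0: "int d dvd (?X0 - p*q)" by (rule mod_prod_dvd) simp_all
  have h1: "int d dvd (?X1 - N*g11*g00*p*q)" by (rule mod_prod_dvd) (simp_all add: algebra_simps)
  have h2: "int d dvd (?X2 - (- N*g10*g01*p*q))" by (rule mod_prod_dvd) (simp_all add: algebra_simps)
  have e: "(- (?c * ?X0)) - (- (?c * ?X1) + - (?c * ?X2)) =
     ?c * (?X1 - N*g11*g00*p*q) + ?c * (?X2 - (- N*g10*g01*p*q)) - ?c * (?X0 - p*q)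
     + ?c * (p*q) * (N*(g00*g11 - g01*g10) - 1)"
    by (simp add: algebra_simps)
  have "int d dvd ((- (?c * ?X0)) - (- (?c * ?X1) + - (?c * ?X2)))"
    unfolding e using h0 h1 h2 ND by (meson dvd_add dvd_diff dvd_mult dvd_mult2)
  then have "chi d (- (?c * ?X0)) = chi d (- (?c * ?X1) + - (?c * ?X2))"
    using chi_cong[OF d0] mod_eq_dvd_iff by blast
  then have "chi d (- (?c * ?X0)) = chi d (- (?c * ?X1)) * chi d (- (?c * ?X2))"
    by (simp only: chi_add)
  then show ?thesis unfolding ph_def Let_def using False
    by (simp add: chi_add mult.assoc)
qed



lemma SQ:
  fixes d :: nat and N g00 g01 g10 g11 i j i' j' p q :: int
  assumes d0: "d > 0" and ND: "int d dvd (N*(g00*g11 - g01*g10) - 1)"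
  shows "(if (- N*g01*i + N*g00*j) mod int d = (- N*g01*i' + N*g00*j') mod int d then 1 else 0)
     * weyl1 d (- p) (- q) ((N*g11*i' - N*g10*j') mod int d) ((N*g11*i - N*g10*j) mod int d)
   = weyl1 d (- (N*g11*p)) (- (g00*q)) i' i * weyl1 d (- (- N*g10*p)) (- (g01*q)) j' j"
proof -
  note z = ZX_part[OF d0 ND, of i j i' j' p q]
  note h = ph_part[OF d0 ND, of p q]
  let ?I = "(if (- N*g01*i + N*g00*j) mod int d = (- N*g01*i' + N*g00*j') mod int d then 1 else 0) :: complex"
  let ?Z0 = "ZX d ((- p) mod int d) ((- q) mod int d) ((N*g11*i' - N*g10*j') mod int d) ((N*g11*i - N*g10*j) mod int d)"
  let ?Z1 = "ZX d ((- (N*g11*p)) mod int d) ((- (g00*q)) mod int d) i' i"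
  let ?Z2 = "ZX d ((- (- N*g10*p)) mod int d) ((- (g01*q)) mod int d) j' j"
  let ?p1 = "ph d (- (N*g11*p)) (- (g00*q))"
  let ?p2 = "ph d (- (- N*g10*p)) (- (g01*q))"
  have "?I * weyl1 d (- p) (- q) ((N*g11*i' - N*g10*j') mod int d) ((N*g11*i - N*g10*j) mod int d)
     = (?p1 * ?p2) * (?I * ?Z0)" unfolding weyl1_split h by (simp only: ac_simps)
  also have "\<dots> = (?p1 * ?p2) * (?Z1 * ?Z2)" using z by simp
  also have "\<dots> = weyl1 d (- (N*g11*p)) (- (g00*q)) i' i * weyl1 d (- (- N*g10*p)) (- (g01*q)) j' j"
    unfolding weyl1_split by (simp only: ac_simps)
  finally show ?thesis .
qed

lemma prod_ind: fixes n :: nat shows "(\<Prod>k<n. (if P k then 1 else 0::complex)) = (if \<forall>k<n. P k then 1 else 0)"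
  by (induction n) (auto simp: less_Suc_eq)

lemma sum3_swap:
  "(\<Sum>a\<in>A. \<Sum>b\<in>B. \<Sum>c\<in>C. G a b c) = (\<Sum>b\<in>B. \<Sum>c\<in>C. \<Sum>a\<in>A. G a b c)"
proof -
  have "(\<Sum>a\<in>A. \<Sum>b\<in>B. \<Sum>c\<in>C. G a b c) = (\<Sum>b\<in>B. \<Sum>a\<in>A. \<Sum>c\<in>C. G a b c)"
    by (rule sum.swap)
  also have "\<dots> = (\<Sum>b\<in>B. \<Sum>c\<in>C. \<Sum>a\<in>A. G a b c)"
    by (rule sum.cong[OF refl], rule sum.swap)
  finally show ?thesis .
qed

lemma sum4_swap:
  "(\<Sum>a\<in>A. \<Sum>b\<in>B. \<Sum>c\<in>C. \<Sum>e\<in>E. G a b c e) = (\<Sum>c\<in>C. \<Sum>e\<in>E. \<Sum>a\<in>A. \<Sum>b\<in>B. G a b c e)"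
proof -
  have "(\<Sum>a\<in>A. \<Sum>b\<in>B. \<Sum>c\<in>C. \<Sum>e\<in>E. G a b c e) = (\<Sum>a\<in>A. \<Sum>c\<in>C. \<Sum>e\<in>E. \<Sum>b\<in>B. G a b c e)"
    by (rule sum.cong[OF refl], rule sum3_swap)
  also have "\<dots> = (\<Sum>c\<in>C. \<Sum>e\<in>E. \<Sum>a\<in>A. \<Sum>b\<in>B. G a b c e)"
    by (rule sum3_swap)
  finally show ?thesis .
qed

lemma finite_idx: "finite (idx d n)"
proof -
  have "idx d n \<subseteq> (\<lambda>g k. if k < n then g k else 0) ` (PiE {..<n} (\<lambda>_. {0..<int d}))"
  proof
    fix x assume x: "x \<in> idx d n"
    let ?g = "restrict x {..<n}"
    have "?g \<in> PiE {..<n} (\<lambda>_. {0..<int d})" using x by (auto simp: idx_def)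
    moreover have "x = (\<lambda>k. if k < n then ?g k else 0)" using x by (auto simp: idx_def)
    ultimately show "x \<in> (\<lambda>g k. if k < n then g k else 0) ` (PiE {..<n} (\<lambda>_. {0..<int d}))" by blast
  qed
  moreover have "finite (PiE {..<n} (\<lambda>_. {0..<int d}))" by (rule finite_PiE) auto
  ultimately show ?thesis by (meson finite_imageI finite_subset)
qed



lemma sum_times: "(\<Sum>z\<in>A\<times>B. g z) = (\<Sum>a\<in>A. \<Sum>b\<in>B. g (a,b))"
  by (simp add: sum.cartesian_product)

theorem mainTheorem7:
  fixes d n :: nat and g00 g01 g10 g11 :: int and \<rho> \<sigma> :: op and p q :: "nat \<Rightarrow> int"
  assumes "prime d" and "n \<ge> 1"
    and "(g00 * g11 - g01 * g10) mod int d \<noteq> 0"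
    and "is_state d n \<rho>" and "is_state d n \<sigma>"
    and "p \<in> idx d n" and "q \<in> idx d n"
  shows "charfun d n (conv d n g00 g01 g10 g11 \<rho> \<sigma>) p q =
           (let N = inv_mod d (g00 * g11 - g01 * g10) in
            charfun d n \<rho> (\<lambda>k. N * g11 * p k) (\<lambda>k. g00 * q k)
          * charfun d n \<sigma> (\<lambda>k. - N * g10 * p k) (\<lambda>k. g01 * q k))"
proof -
  define N where "N = inv_mod d (g00 * g11 - g01 * g10)"
  have d0: "d > 0" using assms(1) prime_gt_0_nat by blast
  have "((g00 * g11 - g01 * g10) * N) mod int d = 1 mod int d"
    using inv_mod_prop[OF assms(1,3)] unfolding N_def by blast
  then have ND: "int d dvd (N*(g00*g11 - g01*g10) - 1)"
    by (simp add: mod_eq_dvd_iff mult.commute)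
  define I where "I = idx d n"
  have fin: "finite I" unfolding I_def by (rule finite_idx)
  define f where "f = (\<lambda>z::(nat\<Rightarrow>int)\<times>(nat\<Rightarrow>int).
     (vmod d (\<lambda>k. N * g11 * fst z k - N * g10 * snd z k), vmod d (\<lambda>k. - N * g01 * fst z k + N * g00 * snd z k)))"
  define U where "U = keyU d g00 g01 g10 g11"
  define T where "T = tensor \<rho> \<sigma>"
  have Ueq: "U x z = (if x = f z then 1 else 0)" for x z
    unfolding U_def keyU_def f_def N_def Let_def by (cases x) auto
  have fI: "f z \<in> I \<times> I" if "z \<in> I \<times> I" for z
    using that d0 unfolding f_def I_def idx_def vmod_def by auto
  define ind :: "bool \<Rightarrow> complex" where "ind b = (if b then 1 else 0)" for b
  have Ueq': "U x z = ind (x = f z)" for x z using Ueq unfolding ind_def by simp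
  have cnj_ind: "cnj (ind b) = ind b" for b unfolding ind_def by simp
  have stepA: "mmul2 d n (mmul2 d n U T) (adj2 U) x y =
      (\<Sum>z\<in>I\<times>I. \<Sum>z'\<in>I\<times>I. ind (x = f z) * T z z' * ind (y = f z'))" for x y
  proof -
    have "mmul2 d n (mmul2 d n U T) (adj2 U) x y
        = (\<Sum>z'\<in>I\<times>I. \<Sum>z\<in>I\<times>I. ind (x = f z) * T z z' * ind (y = f z'))"
      unfolding mmul2_def adj2_def I_def Ueq' cnj_ind
      by (simp add: sum_distrib_right)
    also have "\<dots> = (\<Sum>z\<in>I\<times>I. \<Sum>z'\<in>I\<times>I. ind (x = f z) * T z z' * ind (y = f z'))"
      by (rule sum.swap)
    finally show ?thesis .
  qed
  define C where "C = conv d n g00 g01 g10 g11 \<rho> \<sigma>"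
  have stepB: "C a c = (\<Sum>z\<in>I\<times>I. \<Sum>z'\<in>I\<times>I. T z z' *
      ind (a = fst (f z) \<and> c = fst (f z') \<and> snd (f z) = snd (f z')))" for a c
  proof -
    have "C a c = (\<Sum>j\<in>I. \<Sum>z\<in>I\<times>I. \<Sum>z'\<in>I\<times>I. ind ((a,j) = f z) * T z z' * ind ((c,j) = f z'))"
      unfolding C_def conv_def ptraceB_def stepA[unfolded U_def T_def] I_def T_def ..
    also have "\<dots> = (\<Sum>z\<in>I\<times>I. \<Sum>z'\<in>I\<times>I. \<Sum>j\<in>I. ind ((a,j) = f z) * T z z' * ind ((c,j) = f z'))"
      by (rule sum3_swap)
    also have "\<dots> = (\<Sum>z\<in>I\<times>I. \<Sum>z'\<in>I\<times>I. T z z' *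
      ind (a = fst (f z) \<and> c = fst (f z') \<and> snd (f z) = snd (f z')))"
    proof (intro sum.cong refl)
      fix z z' assume z: "z \<in> I \<times> I"
      have "(\<Sum>j\<in>I. ind ((a,j) = f z) * T z z' * ind ((c,j) = f z'))
          = (\<Sum>j\<in>I. if snd (f z) = j then T z z' * ind (a = fst (f z) \<and> c = fst (f z') \<and> snd (f z) = snd (f z')) else 0)"
        by (intro sum.cong refl) (auto simp: ind_def prod_eq_iff)
      also have "\<dots> = T z z' * ind (a = fst (f z) \<and> c = fst (f z') \<and> snd (f z) = snd (f z'))"
        using fI[OF z] fin by (auto simp add: sum.delta mem_Times_iff)
      finally show "(\<Sum>j\<in>I. ind ((a,j) = f z) * T z z' * ind ((c,j) = f z'))
          = T z z' * ind (a = fst (f z) \<and> c = fst (f z') \<and> snd (f z) = snd (f z'))" .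
    qed
    finally show ?thesis .
  qed
  define W where "W = weyl d n (\<lambda>k. - p k) (\<lambda>k. - q k)"
  have stepC: "charfun d n C p q = (\<Sum>z\<in>I\<times>I. \<Sum>z'\<in>I\<times>I. T z z' *
      (ind (snd (f z) = snd (f z')) * W (fst (f z')) (fst (f z))))"
  proof -
    have "charfun d n C p q = (\<Sum>a\<in>I. \<Sum>c\<in>I. \<Sum>z\<in>I\<times>I. \<Sum>z'\<in>I\<times>I. T z z' *
      ind (a = fst (f z) \<and> c = fst (f z') \<and> snd (f z) = snd (f z')) * W c a)"
      unfolding charfun_def tr_def mmul_def W_def[symmetric] stepB I_def
      by (simp add: sum_distrib_right)
    also have "\<dots> = (\<Sum>z\<in>I\<times>I. \<Sum>z'\<in>I\<times>I. \<Sum>a\<in>I. \<Sum>c\<in>I. T z z' *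
      ind (a = fst (f z) \<and> c = fst (f z') \<and> snd (f z) = snd (f z')) * W c a)"
      by (rule sum4_swap)
    also have "\<dots> = (\<Sum>z\<in>I\<times>I. \<Sum>z'\<in>I\<times>I. T z z' *
      (ind (snd (f z) = snd (f z')) * W (fst (f z')) (fst (f z))))"
    proof (intro sum.cong refl)
      fix z z' assume z: "z \<in> I \<times> I" and z': "z' \<in> I \<times> I"
      have "(\<Sum>a\<in>I. \<Sum>c\<in>I. T z z' * ind (a = fst (f z) \<and> c = fst (f z') \<and> snd (f z) = snd (f z')) * W c a)
          = (\<Sum>a\<in>I. if a = fst (f z) then (\<Sum>c\<in>I. if c = fst (f z') then T z z' * (ind (snd (f z) = snd (f z')) * W c a) else 0) else 0)"
        by (auto simp: ind_def intro!: sum.cong)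
      also have "\<dots> = T z z' * (ind (snd (f z) = snd (f z')) * W (fst (f z')) (fst (f z)))"
        using fI[OF z] fI[OF z'] fin by (auto simp add: sum.delta' mem_Times_iff)
      finally show "(\<Sum>a\<in>I. \<Sum>c\<in>I. T z z' * ind (a = fst (f z) \<and> c = fst (f z') \<and> snd (f z) = snd (f z')) * W c a)
          = T z z' * (ind (snd (f z) = snd (f z')) * W (fst (f z')) (fst (f z)))" .
    qed
    finally show ?thesis .
  qed
  define W1 where "W1 = weyl d n (\<lambda>k. - (N * g11 * p k)) (\<lambda>k. - (g00 * q k))"
  define W2 where "W2 = weyl d n (\<lambda>k. - (- N * g10 * p k)) (\<lambda>k. - (g01 * q k))"
  have stepD: "charfun d n \<rho> (\<lambda>k. N * g11 * p k) (\<lambda>k. g00 * q k)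
          * charfun d n \<sigma> (\<lambda>k. - N * g10 * p k) (\<lambda>k. g01 * q k)
     = (\<Sum>z\<in>I\<times>I. \<Sum>z'\<in>I\<times>I. T z z' * (W1 (fst z') (fst z) * W2 (snd z') (snd z)))"
  proof -
    have "charfun d n \<rho> (\<lambda>k. N * g11 * p k) (\<lambda>k. g00 * q k)
          * charfun d n \<sigma> (\<lambda>k. - N * g10 * p k) (\<lambda>k. g01 * q k)
        = (\<Sum>i\<in>I. \<Sum>i'\<in>I. \<Sum>j\<in>I. \<Sum>j'\<in>I. (\<rho> i i' * W1 i' i) * (\<sigma> j j' * W2 j' j))"
      unfolding charfun_def tr_def mmul_def W1_def[symmetric] W2_def[symmetric] I_def
      by (simp only: sum_distrib_right) (simp only: sum_distrib_left)
    also have "\<dots> = (\<Sum>i\<in>I. \<Sum>j\<in>I. \<Sum>i'\<in>I. \<Sum>j'\<in>I. (\<rho> i i' * W1 i' i) * (\<sigma> j j' * W2 j' j))"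
      by (rule sum.cong[OF refl], rule sum.swap)
    also have "\<dots> = (\<Sum>z\<in>I\<times>I. \<Sum>z'\<in>I\<times>I. T z z' * (W1 (fst z') (fst z) * W2 (snd z') (snd z)))"
      unfolding sum_times T_def tensor_def fst_conv snd_conv
      by (simp add: mult_ac)
    finally show ?thesis .
  qed
  have PW: "ind (snd (f z) = snd (f z')) * W (fst (f z')) (fst (f z)) = W1 (fst z') (fst z) * W2 (snd z') (snd z)"
    if z: "z \<in> I \<times> I" and z': "z' \<in> I \<times> I" for z z'
  proof -
    obtain i j where ij: "z = (i,j)" by (cases z)
    obtain i' j' where ij': "z' = (i',j')" by (cases z')
    have iI: "\<forall>k\<ge>n. i k = 0 \<and> j k = 0 \<and> i' k = 0 \<and> j' k = 0"
      using z z' ij ij' unfolding I_def idx_def by auto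
    have "snd (f z) = snd (f z') \<longleftrightarrow> (\<forall>k<n. (- N*g01*i k + N*g00*j k) mod int d = (- N*g01*i' k + N*g00*j' k) mod int d)"
      unfolding f_def ij ij' vmod_def using iI by (auto simp: fun_eq_iff) (metis not_le)
    then have ie: "ind (snd (f z) = snd (f z')) = (\<Prod>k<n. (if (- N*g01*i k + N*g00*j k) mod int d = (- N*g01*i' k + N*g00*j' k) mod int d then 1 else 0))"
      unfolding ind_def prod_ind by simp
    show ?thesis
      unfolding ie W_def W1_def W2_def weyl_def prod.distrib[symmetric]
      unfolding f_def ij ij' vmod_def fst_conv snd_conv
      by (rule prod.cong[OF refl], rule SQ[OF d0 ND])
  qed
  show ?thesis
    unfolding C_def[symmetric] Let_def N_def[symmetric] stepC stepD
    using PW by (intro sum.cong refl) simp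
qed


end
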